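(* Let $p\in(1,\infty)$ and let $G=(X,b,m,0)$ be a locally finite, $p$-hyperbolic model graph with respect to $x_0\in X$ (with potential $c=0$). Suppose that the curvature ratio $\kappa(r)=k_+(r)/k_-(r)>0$ is constant, equal to some $\kappa>1$, for all $r>r_0$, for some $r_0\in\mathbb{N}_0$. Then the Green's function $g$ with pole $x_0$ is radial and $$g(r)=\frac{1}{(\kappa^{1/(p-1)}-1)\,\partial B(r-1)^{1/(p-1)}},\qquad r>r_0,$$ where $g(r)$ denotes the value of $g$ on $S_r$.
   Context: Weighted graph $G=(X,b,m,c)$: $X$ countably infinite; $b$ symmetric, nonnegative, zero on the diagonal, $\sum_yb(x,y)<\infty$; $m>0$; $c\ge0$; $x\sim y$ iff $b(x,y)>0$; $X$ connected; locally finite: each vertex has finitely many neighbours. $\mathcal{E}_p(f)=\frac12\sum_{x,y}b(x,y)|f(x)-f(y)|^p+\sum_xc(x)|f(x)|^p$; $p$-hyperbolic means $\inf\{\mathcal{E}_p(\varphi):\varphi\text{ finitely supported},\varphi\ge1\text{ on }K\}>0$ for some finite $K$. $d$ is the combinatorial graph distance, $S_r=\{x:d(x_0,x)=r\}$, $\partial B(r)=\sum_{x\in S_r,y\in S_{r+1}}b(x,y)$. $k_\pm(x)=\frac1{m(x)}\sum_{y\sim x,\,d(x_0,y)=d(x_0,x)\pm1}b(x,y)$; $G$ is a model graph with respect to $x_0$ if $k_\pm$ and $c/m$ are constant on each sphere $S_r$, and $k_\pm(r)$ denotes this value. $a^{\langle p-1\rangle}=|a|^{p-2}a$, $\Delta_pf(x)=\frac1{m(x)}\sum_yb(x,y)(f(x)-f(y))^{\langle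 p-1\rangle}$. The Green's function with pole $x_0$ is the minimal positive solution $g$ of $\Delta_pg=\frac1m\mathds{1}_{x_0}$ on $X$. *)

theory Defs
  imports "HOL-Analysis.Analysis"
begin

text \<open>Weighted graphs on the vertex type 'a (the vertex set X is UNIV :: 'a set).
  b : edge weights, m : vertex measure, c : potential.\<close>

definition adj_rel :: "('a \<Rightarrow> 'a \<Rightarrow> real) \<Rightarrow> ('a \<times> 'a) set" where
  "adj_rel b = {(x, y). b x y > 0}"

definition weighted_graph :: "('a \<Rightarrow> 'a \<Rightarrow> real) \<Rightarrow> ('a \<Rightarrow> real) \<Rightarrow> ('a \<Rightarrow> real) \<Rightarrow> bool" where
  "weighted_graph b m c \<longleftrightarrow>
     countable (UNIV :: 'a set) \<and> infinite (UNIV :: 'a set) \<and>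
     (\<forall>x y. b x y = b y x) \<and> (\<forall>x y. b x y \<ge> 0) \<and> (\<forall>x. b x x = 0) \<and>
     (\<forall>x. (\<lambda>y. b x y) summable_on UNIV) \<and>
     (\<forall>x. m x > 0) \<and> (\<forall>x. c x \<ge> 0) \<and>
     (\<forall>x y. (x, y) \<in> (adj_rel b)\<^sup>*)"

definition locally_finite :: "('a \<Rightarrow> 'a \<Rightarrow> real) \<Rightarrow> bool" where
  "locally_finite b \<longleftrightarrow> (\<forall>x. finite {y. b x y > 0})"

definition gdist :: "('a \<Rightarrow> 'a \<Rightarrow> real) \<Rightarrow> 'a \<Rightarrow> 'a \<Rightarrow> nat" where
  "gdist b x y = (LEAST n. (x, y) \<in> (adj_rel b) ^^ n)"

definition sphere_g :: "('a \<Rightarrow> 'a \<Rightarrow> real) \<Rightarrow> 'a \<Rightarrow> nat \<Rightarrow> 'a set" where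
  "sphere_g b x0 r = {x. gdist b x0 x = r}"

definition boundary_B :: "('a \<Rightarrow> 'a \<Rightarrow> real) \<Rightarrow> 'a \<Rightarrow> nat \<Rightarrow> real" where
  "boundary_B b x0 r = (\<Sum>(x, y) \<in> sphere_g b x0 r \<times> sphere_g b x0 (Suc r). b x y)"

definition k_plus :: "('a \<Rightarrow> 'a \<Rightarrow> real) \<Rightarrow> ('a \<Rightarrow> real) \<Rightarrow> 'a \<Rightarrow> 'a \<Rightarrow> real" where
  "k_plus b m x0 x =
     (1 / m x) * (\<Sum>y \<in> {y. b x y > 0 \<and> gdist b x0 y = gdist b x0 x + 1}. b x y)"

definition k_minus :: "('a \<Rightarrow> 'a \<Rightarrow> real) \<Rightarrow> ('a \<Rightarrow> real) \<Rightarrow> 'a \<Rightarrow> 'a \<Rightarrow> real" where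
  "k_minus b m x0 x =
     (1 / m x) * (\<Sum>y \<in> {y. b x y > 0 \<and> int (gdist b x0 y) = int (gdist b x0 x) - 1}. b x y)"

definition model_graph :: "('a \<Rightarrow> 'a \<Rightarrow> real) \<Rightarrow> ('a \<Rightarrow> real) \<Rightarrow> ('a \<Rightarrow> real) \<Rightarrow> 'a \<Rightarrow> bool" where
  "model_graph b m c x0 \<longleftrightarrow>
     (\<forall>x y. gdist b x0 x = gdist b x0 y \<longrightarrow>
        k_plus b m x0 x = k_plus b m x0 y \<and> k_minus b m x0 x = k_minus b m x0 y \<and>
        c x / m x = c y / m y)"

definition energy_p :: "('a \<Rightarrow> 'a \<Rightarrow> real) \<Rightarrow> ('a \<Rightarrow> real) \<Rightarrow> real \<Rightarrow> ('a \<Rightarrow> real) \<Rightarrow> real" where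
  "energy_p b c p f =
     (1/2) * (\<Sum>\<^sub>\<infinity>(x, y) \<in> UNIV. b x y * \<bar>f x - f y\<bar> powr p)
     + (\<Sum>\<^sub>\<infinity>x \<in> UNIV. c x * \<bar>f x\<bar> powr p)"

definition p_hyperbolic :: "('a \<Rightarrow> 'a \<Rightarrow> real) \<Rightarrow> ('a \<Rightarrow> real) \<Rightarrow> real \<Rightarrow> bool" where
  "p_hyperbolic b c p \<longleftrightarrow>
     (\<exists>K. finite K \<and>
        (INF \<phi> \<in> {\<phi> :: 'a \<Rightarrow> real. finite {x. \<phi> x \<noteq> 0} \<and> (\<forall>x \<in> K. \<phi> x \<ge> 1)}.
           energy_p b c p \<phi>) > 0)"

definition sgnpow :: "real \<Rightarrow> real \<Rightarrow> real" where
  "sgnpow a q = \<bar>a\<bar> powr (q - 1) * a"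

definition p_laplacian :: "('a \<Rightarrow> 'a \<Rightarrow> real) \<Rightarrow> ('a \<Rightarrow> real) \<Rightarrow> real \<Rightarrow> ('a \<Rightarrow> real) \<Rightarrow> 'a \<Rightarrow> real" where
  "p_laplacian b m p f x =
     (1 / m x) * (\<Sum>\<^sub>\<infinity>y \<in> UNIV. b x y * sgnpow (f x - f y) (p - 1))"

definition green_eq :: "('a \<Rightarrow> 'a \<Rightarrow> real) \<Rightarrow> ('a \<Rightarrow> real) \<Rightarrow> real \<Rightarrow> 'a \<Rightarrow> ('a \<Rightarrow> real) \<Rightarrow> bool" where
  "green_eq b m p x0 g \<longleftrightarrow>
     (\<forall>x. g x > 0) \<and>
     (\<forall>x. p_laplacian b m p g x = (if x = x0 then 1 / m x else 0))"

definition is_green_function :: "('a \<Rightarrow> 'a \<Rightarrow> real) \<Rightarrow> ('a \<Rightarrow> real) \<Rightarrow> real \<Rightarrow> 'a \<Rightarrow> ('a \<Rightarrow> real) \<Rightarrow> bool" where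
  "is_green_function b m p x0 g \<longleftrightarrow>
     green_eq b m p x0 g \<and> (\<forall>h. green_eq b m p x0 h \<longrightarrow> (\<forall>x. g x \<le> h x))"

end

theory Submission
  imports Defs
begin



locale MG =
  fixes b :: "'a \<Rightarrow> 'a \<Rightarrow> real" and m :: "'a \<Rightarrow> real" and x0 :: 'a
    and p \<kappa> :: real and r0 :: nat
  assumes p1: "p > 1" and wg: "weighted_graph b m (\<lambda>_. 0)" and lf: "locally_finite b"
    and mg: "model_graph b m (\<lambda>_. 0) x0" and kap: "\<kappa> > 1"
    and ratio: "\<forall>x. gdist b x0 x > r0 \<longrightarrow> k_plus b m x0 x / k_minus b m x0 x = \<kappa>"
begin

abbreviation "d x \<equiv> gdist b x0 x"
abbreviation "S r \<equiv> sphere_g b x0 r"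
abbreviation "N x \<equiv> {y. b x y > 0}"
abbreviation "dB r \<equiv> boundary_B b x0 r"

lemma bsym: "b x y = b y x" using wg unfolding weighted_graph_def by blast
lemma bnn: "b x y \<ge> 0" using wg unfolding weighted_graph_def by blast
lemma mpos: "m x > 0" using wg unfolding weighted_graph_def by blast
lemma infU: "infinite (UNIV :: 'a set)" using wg unfolding weighted_graph_def by blast
lemma conn: "(x, y) \<in> (adj_rel b)\<^sup>*" using wg unfolding weighted_graph_def by blast
lemma finN: "finite (N x)" using lf unfolding locally_finite_def by blast

lemma d_path: "(x0, x) \<in> adj_rel b ^^ d x"
proof -
  obtain n where "(x0, x) \<in> adj_rel b ^^ n" using conn[of x0 x] rtrancl_power by blast
  then show ?thesis unfolding gdist_def by (rule LeastI)
qed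

lemma d_le: "(x0, x) \<in> adj_rel b ^^ n \<Longrightarrow> d x \<le> n"
  unfolding gdist_def by (rule Least_le)

lemma d_x0: "d x0 = 0" using d_le[of x0 0] by simp

lemma d_zero: "d x = 0 \<Longrightarrow> x = x0" using d_path[of x] by simp

lemma d_edge: "b x y > 0 \<Longrightarrow> d y \<le> d x + 1"
proof -
  assume "b x y > 0"
  then have "(x, y) \<in> adj_rel b" unfolding adj_rel_def by simp
  with d_path[of x] have "(x0, y) \<in> adj_rel b ^^ Suc (d x)" by auto
  then show ?thesis using d_le by fastforce
qed

lemma d_adj: "b x y > 0 \<Longrightarrow> d x \<le> d y + 1 \<and> d y \<le> d x + 1"
  using d_edge[of x y] d_edge[of y x] bsym[of x y] by auto

lemma d_back: "x \<noteq> x0 \<Longrightarrow> \<exists>z. b z x > 0 \<and> d z + 1 = d x"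
proof -
  assume "x \<noteq> x0"
  then have "d x \<noteq> 0" using d_zero by blast
  then obtain k where k: "d x = Suc k" by (cases "d x") auto
  with d_path[of x] have "(x0, x) \<in> adj_rel b ^^ Suc k" by simp
  then obtain z where z1: "(x0, z) \<in> adj_rel b ^^ k" and z2: "(z, x) \<in> adj_rel b"
    by (rule relpow_Suc_E)
  have "b z x > 0" using z2 unfolding adj_rel_def by simp
  moreover have "d z \<le> k" using d_le[OF z1] .
  moreover have "d x \<le> d z + 1" using d_edge[OF \<open>b z x > 0\<close>] .
  ultimately show ?thesis using k by (intro exI[of _ z]) auto
qed

lemma finS: "finite (S r)"
proof (induction r)
  case 0
  have "S 0 = {x0}" unfolding sphere_g_def using d_x0 d_zero by auto
  then show ?case by simp
next
  case (Suc r)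
  have "S (Suc r) \<subseteq> (\<Union>z\<in>S r. N z)"
  proof
    fix x assume "x \<in> S (Suc r)"
    then have dx: "d x = Suc r" unfolding sphere_g_def by simp
    then have "x \<noteq> x0" using d_x0 by auto
    then obtain z where "b z x > 0" "d z + 1 = d x" using d_back by blast
    then show "x \<in> (\<Union>z\<in>S r. N z)" using dx unfolding sphere_g_def by auto
  qed
  moreover have "finite (\<Union>z\<in>S r. N z)" using Suc finN by blast
  ultimately show ?case by (rule finite_subset)
qed

lemma finBall: "finite {x. d x < R}"
proof -
  have "{x. d x < R} = (\<Union>r<R. S r)" unfolding sphere_g_def by auto
  then show ?thesis using finS by simp
qed

lemma down: "d x = r + n \<Longrightarrow> \<exists>y. d y = r"
proof (induction n arbitrary: x)
  case 0 then show ?case by auto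
next
  case (Suc n)
  then have "x \<noteq> x0" using d_x0 by auto
  then obtain z where "b z x > 0" "d z + 1 = d x" using d_back by blast
  then show ?case using Suc by auto
qed

lemma S_ne: "S r \<noteq> {}"
proof -
  obtain x where "x \<notin> {x. d x < r}" using finBall[of r] infU by (metis UNIV_I finite_subset subsetI)
  then have "d x = r + (d x - r)" by auto
  then show ?thesis using down unfolding sphere_g_def by blast
qed

end


context MG begin

definition "Mr r = (\<Sum>x\<in>S r. m x)"

lemma Mr_pos: "Mr r > 0"
  unfolding Mr_def using finS S_ne mpos by (intro sum_pos) auto

lemma inS: "x \<in> S r \<longleftrightarrow> d x = r" unfolding sphere_g_def by simp

lemma kp_eq: "d x = r \<Longrightarrow> m x * k_plus b m x0 x = (\<Sum>y\<in>S (Suc r). b x y)"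
proof -
  assume dx: "d x = r"
  have e: "{y. b x y > 0 \<and> d y = d x + 1} = S (Suc r) \<inter> N x" using dx inS by auto
  have "(\<Sum>y\<in>S (Suc r) \<inter> N x. b x y) = (\<Sum>y\<in>S (Suc r). b x y)"
    using finS bnn by (intro sum.mono_neutral_left) (auto simp: order.order_iff_strict)
  moreover have "m x * k_plus b m x0 x = (\<Sum>y\<in>S (Suc r) \<inter> N x. b x y)"
    unfolding k_plus_def e using mpos[of x] by simp
  ultimately show ?thesis by simp
qed

lemma km_eq: "d y = Suc r \<Longrightarrow> m y * k_minus b m x0 y = (\<Sum>x\<in>S r. b y x)"
proof -
  assume dy: "d y = Suc r"
  have e: "{x. b y x > 0 \<and> int (d x) = int (d y) - 1} = S r \<inter> N y" using dy inS by auto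
  have "(\<Sum>x\<in>S r \<inter> N y. b y x) = (\<Sum>x\<in>S r. b y x)"
    using finS bnn by (intro sum.mono_neutral_left) (auto simp: order.order_iff_strict)
  moreover have "m y * k_minus b m x0 y = (\<Sum>x\<in>S r \<inter> N y. b y x)"
    unfolding k_minus_def e using mpos[of y] by simp
  ultimately show ?thesis by simp
qed

lemma dB_sum: "dB r = (\<Sum>x\<in>S r. \<Sum>y\<in>S (Suc r). b x y)"
  unfolding boundary_B_def by (simp add: sum.cartesian_product)

lemma dB_plus: "dB r = (\<Sum>x\<in>S r. m x * k_plus b m x0 x)"
  unfolding dB_sum using kp_eq inS by (intro sum.cong) auto

lemma dB_minus: "dB r = (\<Sum>y\<in>S (Suc r). m y * k_minus b m x0 y)"
proof -
  have "dB r = (\<Sum>y\<in>S (Suc r). \<Sum>x\<in>S r. b x y)" unfolding dB_sum by (rule sum.swap)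
  also have "\<dots> = (\<Sum>y\<in>S (Suc r). m y * k_minus b m x0 y)"
    using km_eq inS bsym by (intro sum.cong) auto
  finally show ?thesis .
qed

lemma kp_const: "d x = d y \<Longrightarrow> k_plus b m x0 x = k_plus b m x0 y"
  using mg unfolding model_graph_def by blast
lemma km_const: "d x = d y \<Longrightarrow> k_minus b m x0 x = k_minus b m x0 y"
  using mg unfolding model_graph_def by blast

lemma dB_plus2: "d x = r \<Longrightarrow> dB r = k_plus b m x0 x * Mr r"
proof -
  assume "d x = r"
  then have "dB r = (\<Sum>y\<in>S r. m y * k_plus b m x0 x)"
    unfolding dB_plus using kp_const inS by (intro sum.cong) auto
  then show ?thesis unfolding Mr_def by (simp add: sum_distrib_left mult.commute)
qed

lemma dB_minus2: "d x = Suc r \<Longrightarrow> dB r = k_minus b m x0 x * Mr (Suc r)"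
proof -
  assume "d x = Suc r"
  then have "dB r = (\<Sum>y\<in>S (Suc r). m y * k_minus b m x0 x)"
    unfolding dB_minus using km_const inS by (intro sum.cong) auto
  then show ?thesis unfolding Mr_def by (simp add: sum_distrib_left mult.commute)
qed

lemma dB_pos: "dB r > 0"
proof -
  obtain y where y: "y \<in> S (Suc r)" using S_ne by blast
  then have "y \<noteq> x0" using d_x0 inS by auto
  then obtain z where z: "b z y > 0" "d z + 1 = d y" using d_back by blast
  then have "z \<in> S r" using y inS by auto
  have "0 < (\<Sum>(x, y) \<in> S r \<times> S (Suc r). b x y)"
    using finS z y \<open>z \<in> S r\<close> bnn by (intro sum_pos2[where i="(z,y)"]) auto
  then show ?thesis unfolding boundary_B_def .
qed

lemma kp_pos: "k_plus b m x0 x > 0"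
  using dB_plus2[of x "d x"] dB_pos[of "d x"] Mr_pos[of "d x"]
  by (metis zero_less_mult_pos2)

lemma km_pos: "x \<noteq> x0 \<Longrightarrow> k_minus b m x0 x > 0"
proof -
  assume "x \<noteq> x0"
  then obtain r where r: "d x = Suc r" using d_zero by (cases "d x") auto
  show ?thesis using dB_minus2[OF r] dB_pos[of r] Mr_pos[of "Suc r"]
    by (metis zero_less_mult_pos2)
qed

lemma outward: "\<exists>y. b x y > 0 \<and> d y = Suc (d x)"
proof (rule ccontr)
  assume a: "\<not> ?thesis"
  have "(\<Sum>y\<in>S (Suc (d x)). b x y) = 0"
    using a bnn inS by (intro sum.neutral) (metis order.not_eq_order_implies_strict)
  then have "m x * k_plus b m x0 x = 0" using kp_eq by simp
  then show False using mpos[of x] kp_pos[of x] by simp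
qed

lemma dB_ratio: "r > r0 \<Longrightarrow> dB r = \<kappa> * dB (r - 1)"
proof -
  assume r: "r > r0"
  obtain x where x: "d x = r" using S_ne inS by blast
  then have xx: "x \<noteq> x0" using r d_x0 by auto
  have "k_plus b m x0 x / k_minus b m x0 x = \<kappa>" using ratio r x by auto
  then have "k_plus b m x0 x = \<kappa> * k_minus b m x0 x" using km_pos[OF xx] by (simp add: field_simps)
  moreover have "dB (r - 1) = k_minus b m x0 x * Mr r"
    using dB_minus2[of x "r - 1"] x r by simp
  ultimately show ?thesis using dB_plus2[OF x] by simp
qed

end



lemma sgnpow_alt:
  fixes p a :: real
  shows "sgnpow a (p - 1) = sgn a * \<bar>a\<bar> powr (p - 1)"
proof (cases "a = 0")
  case True then show ?thesis unfolding sgnpow_def by simp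
next
  case False
  have h: "\<bar>a\<bar> powr (p - 1 - 1) * \<bar>a\<bar> = \<bar>a\<bar> powr (p - 1)"
    using powr_add[of "\<bar>a\<bar>" "p - 1 - 1" 1] False by simp
  have "a = sgn a * \<bar>a\<bar>" by (simp add: sgn_mult_abs)
  then have "sgnpow a (p - 1) = sgn a * (\<bar>a\<bar> powr (p - 1 - 1) * \<bar>a\<bar>)" unfolding sgnpow_def
    by (metis mult.commute mult.left_commute)
  then show ?thesis unfolding h .
qed

lemma sgnpow_less:
  fixes p a c :: real
  assumes p: "p > 1" and ac: "a < c"
  shows "sgnpow a (p - 1) < sgnpow c (p - 1)"
proof -
  have e: "p - 1 > 0" using p by simp
  consider "0 \<le> a" | "a < 0" "c \<le> 0" | "a < 0" "0 < c" using ac by linarith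
  then show ?thesis
  proof cases
    case 1
    then have "\<bar>a\<bar> powr (p - 1) < \<bar>c\<bar> powr (p - 1)" using ac e
      by (intro powr_less_mono2) auto
    moreover have "c > 0" using 1 ac by simp
    ultimately show ?thesis using 1 unfolding sgnpow_alt
      by (cases "a = 0") auto
  next
    case 2
    then have "\<bar>c\<bar> powr (p - 1) < \<bar>a\<bar> powr (p - 1)" using ac e
      by (intro powr_less_mono2) auto
    then show ?thesis using 2 unfolding sgnpow_alt
      by (cases "c = 0") auto
  next
    case 3
    have h1: "\<bar>a\<bar> powr (p - 1) > 0" "\<bar>c\<bar> powr (p - 1) > 0" using 3 by auto
    have "sgn a = -1" "sgn c = 1" using 3 by auto
    then have "sgnpow a (p - 1) = - (\<bar>a\<bar> powr (p - 1))" "sgnpow c (p - 1) = \<bar>c\<bar> powr (p - 1)"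
      unfolding sgnpow_alt by simp_all
    then show ?thesis using h1 by linarith
  qed
qed

lemma sgnpow_le:
  fixes p a c :: real
  assumes p: "p > 1" and ac: "a \<le> c"
  shows "sgnpow a (p - 1) \<le> sgnpow c (p - 1)"
  using sgnpow_less[OF p, of a c] ac by (cases "a = c") auto

lemma sgnpow_inj:
  fixes p a c :: real
  assumes p: "p > 1" and "sgnpow a (p - 1) = sgnpow c (p - 1)"
  shows "a = c"
proof (rule ccontr)
  assume "a \<noteq> c"
  then have "a < c \<or> c < a" by linarith
  then show False using sgnpow_less[OF p, of a c] sgnpow_less[OF p, of c a] assms(2) by auto
qed

lemma sgnpow_val:
  fixes p D :: real
  assumes p: "p > 1" and D: "D > 0"
  shows "sgnpow (1 / D powr (1 / (p - 1))) (p - 1) = 1 / D"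
    and "sgnpow (- (1 / D powr (1 / (p - 1)))) (p - 1) = - (1 / D)"
proof -
  have pos: "1 / D powr (1 / (p - 1)) > 0" using D by simp
  have "(1 / D powr (1 / (p - 1))) powr (p - 1) = (D powr (- (1 / (p - 1)))) powr (p - 1)"
    by (simp add: powr_minus_divide)
  also have "\<dots> = D powr (- 1)" unfolding powr_powr using p D by simp
  also have "\<dots> = 1 / D" using D by (simp add: powr_minus_divide)
  finally have k: "(1 / D powr (1 / (p - 1))) powr (p - 1) = 1 / D" .
  show "sgnpow (1 / D powr (1 / (p - 1))) (p - 1) = 1 / D"
    unfolding sgnpow_alt using pos k D by simp
  show "sgnpow (- (1 / D powr (1 / (p - 1)))) (p - 1) = - (1 / D)"
    unfolding sgnpow_alt using pos k D by simp
qed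

context MG begin

definition "q = 1 / (p - 1)"
definition "C = 1 / (\<kappa> powr q - 1)"
definition "G r = (if r0 < r then C / dB (r - 1) powr q
                   else C / dB r0 powr q + (\<Sum>j\<in>{r..r0}. 1 / dB j powr q))"

lemma dB_ne: "dB r \<noteq> 0" using dB_pos[of r] by simp

lemma q_pos: "q > 0" unfolding q_def using p1 by simp
lemma t_gt1: "\<kappa> powr q > 1" using powr_less_mono[of 0 q \<kappa>] kap q_pos by simp  
lemma C_pos: "C > 0" unfolding C_def using t_gt1 by simp

lemma G_step: "G r - G (Suc r) = 1 / dB r powr q"
proof (cases "r0 < r")
  case True
  have rr: "dB r = \<kappa> * dB (r - 1)" using dB_ratio True by simp
  define a where "a = dB (r - 1) powr q"
  define t where "t = \<kappa> powr q"
  have a: "a > 0" unfolding a_def using dB_ne by simp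
  have t: "t > 1" unfolding t_def using t_gt1 .
  have e1: "dB r powr q = t * a" unfolding rr a_def t_def using kap dB_pos
    by (simp add: powr_mult)
  have e2: "G r = C / a" "G (Suc r) = C / dB r powr q" using True unfolding G_def a_def by auto
  have e3: "C = 1 / (t - 1)" unfolding C_def t_def ..
  have c1: "C * (t - 1) = 1" unfolding e3 using t by simp
  have "C / a - C / (t * a) = C * (t - 1) / (t * a)" using a t by (simp add: field_simps)
  then have "C / a - C / (t * a) = 1 / (t * a)" unfolding c1 .
  then show ?thesis unfolding e2 e1 .
next
  case False
  show ?thesis
  proof (cases "r = r0")
    case True
    then show ?thesis unfolding G_def by simp
  next
    case False2: False
    then have "r < r0" using False by simp
    then have "{r..r0} = insert r {Suc r..r0}" by auto
    then show ?thesis unfolding G_def using False \<open>r < r0\<close> by simp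
  qed
qed

lemma G_pos: "G r > 0"
proof -
  have "C / dB j powr q > 0" for j using C_pos dB_pos[of j] by simp
  moreover have "(\<Sum>j\<in>{r..r0}. 1 / dB j powr q) \<ge> 0" using dB_pos by (intro sum_nonneg) simp
  ultimately show ?thesis unfolding G_def by (auto intro: add_pos_nonneg)
qed

lemma G_dec: "r \<le> s \<Longrightarrow> G s \<le> G r"
proof (induction s rule: dec_induct)
  case base then show ?case by simp
next
  case (step n)
  have "G n - G (Suc n) > 0" unfolding G_step using dB_ne[of n] by simp
  then show ?case using step by simp
qed

lemma G_geo: "r0 < r \<Longrightarrow> G (Suc r) = G r / \<kappa> powr q"
proof -
  assume r: "r0 < r"
  have "G r - G (Suc r) = 1 / dB r powr q" by (rule G_step)
  have rr: "dB r = \<kappa> * dB (r - 1)" using dB_ratio r by simp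
  have "G (Suc r) = C / dB r powr q" "G r = C / dB (r - 1) powr q" using r unfolding G_def by auto
  moreover have "dB r powr q = \<kappa> powr q * dB (r - 1) powr q" unfolding rr using kap dB_pos
    by (simp add: powr_mult)
  ultimately show ?thesis by simp
qed

lemma G_geo_n: "G (Suc r0 + n) = G (Suc r0) / (\<kappa> powr q) ^ n"
proof (induction n)
  case 0 then show ?case by simp
next
  case (Suc n)
  have "G (Suc r0 + Suc n) = G (Suc r0 + n) / \<kappa> powr q" using G_geo[of "Suc r0 + n"] by simp
  then show ?case using Suc by simp
qed

lemma G_small: "\<epsilon> > 0 \<Longrightarrow> \<exists>R. G R < \<epsilon>"
proof -
  assume e: "\<epsilon> > 0"
  obtain n where n: "G (Suc r0) / \<epsilon> < (\<kappa> powr q) ^ n" using real_arch_pow[OF t_gt1] by blast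
  have "(\<kappa> powr q) ^ n > 0" using t_gt1 kap by (intro zero_less_power) simp
  then have "G (Suc r0) / (\<kappa> powr q) ^ n < \<epsilon>" using n e by (simp add: field_simps)
  then show ?thesis using G_geo_n by metis
qed

end


context MG begin

lemma lap_fin: "p_laplacian b m p f x = (1 / m x) * (\<Sum>y\<in>N x. b x y * sgnpow (f x - f y) (p - 1))"
proof -
  have "(\<Sum>\<^sub>\<infinity>y\<in>UNIV. b x y * sgnpow (f x - f y) (p - 1)) = (\<Sum>\<^sub>\<infinity>y\<in>N x. b x y * sgnpow (f x - f y) (p - 1))"
  proof (rule infsum_cong_neutral)
    fix y assume "y \<in> UNIV - N x"
    then have "b x y = 0" using bnn[of x y] by simp
    then show "b x y * sgnpow (f x - f y) (p - 1) = 0" by simp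
  qed auto
  then show ?thesis unfolding p_laplacian_def using finN by simp
qed

definition "u x = G (d x)"

lemma term_u: "b x y > 0 \<Longrightarrow> b x y * sgnpow (u x - u y) (p - 1) =
   (if d y = Suc (d x) then (1 / dB (d x)) * b x y else 0) +
   (if Suc (d y) = d x then (- (1 / dB (d x - 1))) * b x y else 0)"
proof -
  assume bxy: "b x y > 0"
  consider "d y = Suc (d x)" | "d y = d x" | "Suc (d y) = d x" using d_adj[OF bxy] by linarith
  then show ?thesis
  proof cases
    case 1
    then have "u x - u y = 1 / dB (d x) powr (1 / (p - 1))" unfolding u_def using G_step q_def by simp
    then show ?thesis using 1 sgnpow_val(1)[OF p1 dB_pos] by simp
  next
    case 2
    then show ?thesis unfolding u_def sgnpow_def by simp
  next
    case 3
    then have "u x - u y = - (1 / dB (d y) powr (1 / (p - 1)))" unfolding u_def using G_step[of "d y"] q_def by simp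
    moreover have "d y = d x - 1" using 3 by simp
    ultimately show ?thesis using 3 sgnpow_val(2)[OF p1 dB_pos] by simp
  qed
qed

lemma S0: "S 0 = {x0}" using inS d_x0 d_zero by auto

lemma lap_u: "p_laplacian b m p u x = (if x = x0 then 1 / m x else 0)"
proof -
  define SP where "SP = (\<Sum>y\<in>{y\<in>N x. d y = Suc (d x)}. b x y)"
  define SQ where "SQ = (\<Sum>y\<in>{y\<in>N x. Suc (d y) = d x}. b x y)"
  have "(\<Sum>y\<in>N x. b x y * sgnpow (u x - u y) (p - 1)) =
     (\<Sum>y\<in>N x. (if d y = Suc (d x) then (1 / dB (d x)) * b x y else 0) +
       (if Suc (d y) = d x then (- (1 / dB (d x - 1))) * b x y else 0))"
    using term_u by (intro sum.cong) auto
  also have "\<dots> = (1 / dB (d x)) * SP - (1 / dB (d x - 1)) * SQ"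
    unfolding sum.distrib SP_def SQ_def using finN
    by (simp add: sum.inter_filter[symmetric] sum_distrib_left sum_negf)
  finally have L: "p_laplacian b m p u x = (1 / m x) * ((1 / dB (d x)) * SP - (1 / dB (d x - 1)) * SQ)"
    unfolding lap_fin by simp
  have SP: "SP = m x * k_plus b m x0 x"
  proof -
    have "{y\<in>N x. d y = Suc (d x)} = {y. b x y > 0 \<and> d y = d x + 1}" by auto
    then show ?thesis unfolding SP_def k_plus_def using mpos[of x] by simp
  qed
  have SQ: "SQ = m x * k_minus b m x0 x"
  proof -
    have "{y\<in>N x. Suc (d y) = d x} = {y. b x y > 0 \<and> int (d y) = int (d x) - 1}" by auto
    then show ?thesis unfolding SQ_def k_minus_def using mpos[of x] by simp
  qed
  have kp: "k_plus b m x0 x > 0" by (rule kp_pos)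
  have mx: "m x > 0" by (rule mpos)
  show ?thesis
  proof (cases "x = x0")
    case True
    have "SQ = 0" unfolding SQ_def using True d_x0 by simp
    moreover have "dB 0 = k_plus b m x0 x0 * m x0" using dB_plus2[of x0 0] d_x0 S0 unfolding Mr_def by simp
    ultimately show ?thesis using L True d_x0 SP kp mx by simp
  next
    case False
    then obtain r where r: "d x = Suc r" using d_zero by (cases "d x") auto
    have km: "k_minus b m x0 x > 0" using km_pos[OF False] .
    have e1: "dB (d x) = k_plus b m x0 x * Mr (d x)" using dB_plus2 by simp
    have e2: "dB (d x - 1) = k_minus b m x0 x * Mr (d x)" using dB_minus2[OF r] r by simp
    have "(1 / dB (d x)) * SP = m x / Mr (d x)" unfolding e1 SP using kp by simp
    moreover have "(1 / dB (d x - 1)) * SQ = m x / Mr (d x)" unfolding e2 SQ using km by simp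
    ultimately show ?thesis using L False by simp
  qed
qed

lemma u_green: "green_eq b m p x0 u"
  unfolding green_eq_def using lap_u G_pos u_def by simp

lemma propagate:
  fixes f h :: "'a \<Rightarrow> real" and c :: real
  assumes lap: "p_laplacian b m p f x = p_laplacian b m p h x"
    and mx: "\<And>y. f y - c - h y \<le> f x - c - h x"
    and bxy: "b x y > 0"
  shows "f y - c - h y = f x - c - h x"
proof -
  define A where "A y = b x y * sgnpow (f x - f y) (p - 1)" for y
  define B where "B y = b x y * sgnpow (h x - h y) (p - 1)" for y
  have "(1 / m x) * sum A (N x) = (1 / m x) * sum B (N x)" using lap unfolding lap_fin A_def B_def .
  then have "sum A (N x) = sum B (N x)" using mpos[of x] by simp
  then have z: "(\<Sum>y\<in>N x. A y - B y) = 0" by (simp add: sum_subtractf)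
  have nn: "A y - B y \<ge> 0" if "y \<in> N x" for y
  proof -
    have "h x - h y \<le> f x - f y" using mx[of y] by simp
    then have "sgnpow (h x - h y) (p - 1) \<le> sgnpow (f x - f y) (p - 1)" using sgnpow_le[OF p1] by blast
    then show ?thesis unfolding A_def B_def using bnn[of x y]
      by (simp add: right_diff_distrib[symmetric])
  qed
  have "A y - B y = 0" using z nn finN bxy by (subst (asm) sum_nonneg_eq_0_iff) auto
  then have "b x y * (sgnpow (f x - f y) (p - 1) - sgnpow (h x - h y) (p - 1)) = 0"
    unfolding A_def B_def by (simp add: right_diff_distrib)
  then have "sgnpow (f x - f y) (p - 1) = sgnpow (h x - h y) (p - 1)" using bxy by simp
  then have "f x - f y = h x - h y" by (rule sgnpow_inj[OF p1])
  then show ?thesis by simp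
qed

lemma compare:
  assumes hg: "green_eq b m p x0 h"
  shows "u x1 \<le> h x1"
proof (rule ccontr)
  assume "\<not> ?thesis"
  then have pos: "u x1 - h x1 > 0" by simp
  obtain R where R: "G R < u x1 - h x1" using G_small[OF pos] by blast
  define w where "w x = u x - G R - h x" for x
  have hpos: "h x > 0" for x using hg unfolding green_eq_def by simp
  have wR: "w x < 0" if "R \<le> d x" for x
    using G_dec[OF that] hpos[of x] unfolding w_def u_def by simp
  have w1: "w x1 > 0" unfolding w_def using R by simp
  define U where "U = {x. d x < R}"
  have "\<not> R \<le> d x1" using wR[of x1] w1 by linarith
  then have x1U: "x1 \<in> U" unfolding U_def by simp
  have finU: "finite U" unfolding U_def by (rule finBall)
  define M where "M = Max (w ` U)"
  have "M \<in> w ` U" unfolding M_def using finU x1U by (intro Max_in) auto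
  then obtain x2 where x2: "x2 \<in> U" "w x2 = M" by blast
  have M1: "w x1 \<le> M" unfolding M_def using finU x1U by simp
  have glob: "w y \<le> M" for y
  proof (cases "y \<in> U")
    case True then show ?thesis unfolding M_def using finU by simp
  next
    case False then show ?thesis using wR[of y] M1 w1 unfolding U_def by force
  qed
  have lapeq: "p_laplacian b m p u x = p_laplacian b m p h x" for x
    using lap_u hg unfolding green_eq_def by simp
  have chain: "\<exists>y. d y = d x2 + k \<and> w y = M" for k
  proof (induction k)
    case 0 then show ?case using x2 by auto
  next
    case (Suc k)
    then obtain y where y: "d y = d x2 + k" "w y = M" by blast
    obtain z where z: "b y z > 0" "d z = Suc (d y)" using outward by blast
    have "w z = w y" using propagate[where f=u and h=h and c="G R" and x=y and y=z, OF lapeq] glob y z unfolding w_def by simp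
    then show ?case using y z by (intro exI[of _ z]) simp
  qed
  then obtain y where "d y = d x2 + R" "w y = M" by blast
  then show False using wR[of y] M1 w1 by simp
qed

end



theorem proposition4p9:
  fixes b :: "'a \<Rightarrow> 'a \<Rightarrow> real" and m :: "'a \<Rightarrow> real" and x0 :: 'a
    and p \<kappa> :: real and r0 :: nat and g :: "'a \<Rightarrow> real"
  assumes "p > 1"
    and "weighted_graph b m (\<lambda>_. 0)"
    and "locally_finite b"
    and "p_hyperbolic b (\<lambda>_. 0) p"
    and "model_graph b m (\<lambda>_. 0) x0"
    and "\<kappa> > 1"
    and "\<forall>x. gdist b x0 x > r0 \<longrightarrow> k_plus b m x0 x / k_minus b m x0 x = \<kappa>"
    and "is_green_function b m p x0 g"
  shows "(\<forall>x y. gdist b x0 x = gdist b x0 y \<longrightarrow> g x = g y) \<and>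
         (\<forall>x. gdist b x0 x > r0 \<longrightarrow>
            g x = 1 / ((\<kappa> powr (1 / (p - 1)) - 1)
                       * boundary_B b x0 (gdist b x0 x - 1) powr (1 / (p - 1))))"
proof -
  interpret M: MG b m x0 p \<kappa> r0
    using assms(1,2,3,5,6,7) by (intro MG.intro) auto
  have eq: "g x = M.u x" for x
  proof -
    have "g x \<le> M.u x" using assms(8) M.u_green unfolding is_green_function_def by blast
    moreover have "M.u x \<le> g x" using assms(8) M.compare unfolding is_green_function_def by blast
    ultimately show ?thesis by simp
  qed
  show ?thesis
  proof (intro conjI allI impI)
    fix x y assume "gdist b x0 x = gdist b x0 y"
    then show "g x = g y" unfolding eq M.u_def by simp
  next
    fix x assume "gdist b x0 x > r0"
    then show "g x = 1 / ((\<kappa> powr (1 / (p - 1)) - 1)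
                       * boundary_B b x0 (gdist b x0 x - 1) powr (1 / (p - 1)))"
      unfolding eq M.u_def M.G_def M.C_def M.q_def by simp
  qed
qed

end
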